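(* Let $n$ be a positive integer and $(\alpha,\beta)\in\{(0,0),(1,0),(1,1),(2,1),(3,1),(3,2),(4,2)\}$. Let \[ w_{n,\alpha,\beta}=b^{n+1}(ab)^n b^{2n+1+\alpha}a^{2n+1+\beta}. \] Then $S_d(w_{n,\alpha,\beta})\ge 3n+1+\left\lfloor\frac{\alpha+\beta}{3}\right\rfloor$.
   Context: A word is a finite word over the two-letter alphabet $\{a,b\}$, written multiplicatively (so $x^m$ is the concatenation of $m$ copies of $x$). A word $w=a_1\cdots a_n$ is a palindrome if $a_i=a_{n-i+1}$ for all $i\le n$, and an antipalindrome if $a_i\neq a_{n-i+1}$ for all $i\le n$. For a word $w$, $S_d(w)$ is the minimal number of letters of $w$ whose deletion from $w$ yields a palindrome or an antipalindrome. $\lfloor x\rfloor$ denotes the integer part of $x$. *)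

theory Defs
  imports Main "HOL-Library.Sublist"
begin

datatype letter = a | b

definition palindrome :: "letter list \<Rightarrow> bool" where
  "palindrome w \<longleftrightarrow> (\<forall>i<length w. w ! i = w ! (length w - 1 - i))"

definition antipalindrome :: "letter list \<Rightarrow> bool" where
  "antipalindrome w \<longleftrightarrow> (\<forall>i<length w. w ! i \<noteq> w ! (length w - 1 - i))"

definition wpow :: "letter list \<Rightarrow> nat \<Rightarrow> letter list" where
  "wpow x m = concat (replicate m x)"

definition S_d :: "letter list \<Rightarrow> nat" where
  "S_d w = (LEAST k. \<exists>v. subseq v w \<and> length w - length v = k \<and>
                         (palindrome v \<or> antipalindrome v))"

end

theory Submission
  imports Defs
begin

lemma count_mono: "subseq xs ys \<Longrightarrow> count_list xs x \<le> count_list ys x"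
  by (induction rule: list_emb.induct) auto

lemma len_count: "length (xs::letter list) = count_list xs a + count_list xs b"
proof (induction xs)
  case (Cons y ys) then show ?case by (cases y) auto
qed simp

lemma subseq_rep: "subseq xs (replicate k x) \<Longrightarrow> xs = replicate (length xs) x \<and> length xs \<le> k"
proof -
  assume h: "subseq xs (replicate k x)"
  have "set xs \<subseteq> set (replicate k x)" using h by (auto elim: list_emb_set)
  then show ?thesis using h list_emb_length[OF h] by (auto intro!: replicate_eqI)
qed

lemma wpow_Suc: "wpow [a,b] (Suc n) = a # b # wpow [a,b] n"
  by (simp add: wpow_def)

lemma wpow_counts: "count_list (wpow [a,b] n) a = n \<and> count_list (wpow [a,b] n) b = n \<and> length (wpow [a,b] n) = 2*n"
  by (induction n) (auto simp: wpow_Suc wpow_def)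

lemma ab_split: "W1 @ W2 = wpow [a,b] n \<Longrightarrow>
   count_list W1 b + count_list W2 a \<le> n \<and> count_list W1 a + count_list W2 b \<le> n + 1"
proof (induction n arbitrary: W1 W2)
  case 0
  then show ?case by (simp add: wpow_def)
next
  case (Suc n)
  show ?case
  proof (cases W1)
    case Nil
    then show ?thesis using Suc.prems wpow_counts[of "Suc n"] by simp
  next
    case (Cons x W1')
    show ?thesis
    proof (cases W1')
      case Nil
      then show ?thesis using Suc.prems Cons wpow_counts[of n] by (auto simp: wpow_Suc)
    next
      case (Cons y W1'')
      then have "W1'' @ W2 = wpow [a,b] n" "x = a" "y = b" using Suc.prems \<open>W1 = x # W1'\<close> by (auto simp: wpow_Suc)
      then show ?thesis using Suc.IH[of W1'' W2] Cons \<open>W1 = x # W1'\<close> by auto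
    qed
  qed
qed

lemma T2: "subseq (X1 @ X2) (wpow [a,b] n) \<Longrightarrow>
   count_list X1 b + count_list X2 a \<le> n \<and> count_list X1 a + count_list X2 b \<le> n + 1"
proof -
  assume "subseq (X1 @ X2) (wpow [a,b] n)"
  then obtain W1 W2 where "wpow [a,b] n = W1 @ W2" "subseq X1 W1" "subseq X2 W2"
    using list_emb_appendD by blast
  moreover have "count_list X1 b \<le> count_list W1 b" "count_list X1 a \<le> count_list W1 a"
    "count_list X2 b \<le> count_list W2 b" "count_list X2 a \<le> count_list W2 a"
    using count_mono[OF \<open>subseq X1 W1\<close>] count_mono[OF \<open>subseq X2 W2\<close>] by auto
  ultimately show ?thesis using ab_split[of W1 W2 n] by fastforce
qed

lemma nth_mid: "length F \<le> k \<Longrightarrow> k < length F + r \<Longrightarrow> (F @ replicate r x @ G) ! k = x"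
  by (auto simp: nth_append)

lemma split_lead: "\<exists>c Z. xs = replicate c x @ Z \<and> (Z = [] \<or> (\<exists>y Z'. Z = y # Z' \<and> y \<noteq> x))"
proof (induction xs)
  case Nil then show ?case by auto
next
  case (Cons y xs)
  then obtain c Z where "xs = replicate c x @ Z" "Z = [] \<or> (\<exists>y Z'. Z = y # Z' \<and> y \<noteq> x)" by blast
  then show ?case
  proof (cases "y = x")
    case True then show ?thesis using \<open>xs = _\<close> \<open>Z = [] \<or> _\<close> by (intro exI[of _ "Suc c"] exI[of _ Z]) auto
  next
    case False then show ?thesis by (intro exI[of _ 0] exI[of _ "y # xs"]) auto
  qed
qed

lemma count_rep: "count_list (replicate k x) y = (if x = y then k else 0)"
  by (induction k) auto

lemma decomp:
  assumes "subseq v (replicate P b @ W @ replicate A b @ replicate B a)"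
  shows "\<exists>p X r s. v = replicate p b @ X @ replicate r b @ replicate s a \<and> p \<le> P \<and> subseq X W \<and> r \<le> A \<and> s \<le> B"
proof -
  obtain v1 v2 where 1: "v = v1 @ v2" "subseq v1 (replicate P b)" "subseq v2 (W @ replicate A b @ replicate B a)"
    using assms by (auto elim: subseq_appendE)
  obtain v3 v4 where 2: "v2 = v3 @ v4" "subseq v3 W" "subseq v4 (replicate A b @ replicate B a)"
    using 1(3) by (auto elim: subseq_appendE)
  obtain v5 v6 where 3: "v4 = v5 @ v6" "subseq v5 (replicate A b)" "subseq v6 (replicate B a)"
    using 2(3) by (auto elim: subseq_appendE)
  have e1: "v1 = replicate (length v1) b" "length v1 \<le> P" using subseq_rep[OF 1(2)] by auto
  have e2: "v5 = replicate (length v5) b" "length v5 \<le> A" using subseq_rep[OF 3(2)] by auto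
  have e3: "v6 = replicate (length v6) a" "length v6 \<le> B" using subseq_rep[OF 3(3)] by auto
  have "v = replicate (length v1) b @ v3 @ replicate (length v5) b @ replicate (length v6) a"
    using 1(1) 2(1) 3(1) e1(1) e2(1) e3(1) by metis
  then show ?thesis using e1(2) e2(2) e3(2) 2(2) by blast
qed

lemma pal_bound:
  assumes sv: "subseq v (replicate (n+1) b @ wpow [a,b] n @ replicate A b @ replicate B a)"
    and pal: "palindrome v" and hA: "2*n+1 \<le> A" and hB: "B \<le> n+1+A"
  shows "length v \<le> 2*n+1+A"
proof -
  obtain p X r s where v: "v = replicate p b @ X @ replicate r b @ replicate s a" and hp: "p \<le> n+1"
    and hX: "subseq X (wpow [a,b] n)" and hr: "r \<le> A" and hs: "s \<le> B"
    using decomp[OF sv] by blast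
  have P: "\<And>i. i < length v \<Longrightarrow> v!i = v!(length v - 1 - i)" using pal unfolding palindrome_def by blast
  have L: "length v = p + length X + r + s" using v by simp
  have cX: "count_list X a \<le> n" "count_list X b \<le> n"
    using count_mono[OF hX, of a] count_mono[OF hX, of b] wpow_counts[of n] by auto
  have lX: "length X = count_list X a + count_list X b" by (rule len_count)
  have v2: "v = (replicate p b @ X) @ replicate r b @ replicate s a" using v by simp
  have v3: "v = (replicate p b @ X @ replicate r b) @ replicate s a @ []" using v by simp
  consider "p > 0 \<and> s > 0" | "s = 0" | "p = 0 \<and> s > 0" by (cases "s = 0"; cases "p = 0") auto
  then show ?thesis
  proof cases
    case 1
    have "v!0 = b" using v 1 by (simp add: nth_append)
    moreover have "v!(length v - 1) = a" using L 1 by (subst v3, intro nth_mid) auto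
    moreover have "v!0 = v!(length v - 1 - 0)" using P[of 0] L 1 by auto
    ultimately show ?thesis by simp
  next
    case 2
    show ?thesis
    proof (cases "a \<in> set X")
      case False
      then have "count_list X a = 0" by (simp add: count_list_0_iff)
      then show ?thesis using L 2 lX cX hp hr by simp
    next
      case True
      obtain c Z where X: "X = replicate c b @ Z" and Zc: "Z = [] \<or> (\<exists>y Z'. Z = y # Z' \<and> y \<noteq> b)"
        using split_lead[of X b] by blast
      have "Z \<noteq> []" using True X by auto
      then obtain Z' where Z: "Z = a # Z'" using Zc by (metis letter.exhaust)
      have va: "v!(p+c) = a" using v X Z by (simp add: nth_append)
      have "r \<le> p + c"
      proof (rule ccontr)
        assume "\<not> r \<le> p+c"
        then have "v!(length v - 1 - (p+c)) = b" using L X Z 2 by (subst v2, intro nth_mid) auto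
        moreover have "v!(p+c) = v!(length v - 1 - (p+c))" using P[of "p+c"] L X Z by auto
        ultimately show False using va by simp
      qed
      moreover have "count_list (replicate c b) b + count_list Z a \<le> n" using T2[of "replicate c b" Z n] hX X by simp
      ultimately show ?thesis using L 2 lX cX X hp hr hA by (simp add: count_rep)
    qed
  next
    case 3
    have v0: "v = X @ replicate r b @ replicate s a" using v 3 by simp
    have v4: "v = (X @ replicate r b) @ replicate s a @ []" using v0 by simp
    obtain c Y where X: "X = replicate c a @ Y" and Yc: "Y = [] \<or> (\<exists>y Y'. Y = y # Y' \<and> y \<noteq> a)"
      using split_lead[of X a] by blast
    have hc: "c \<le> n" using cX X by (simp add: count_rep)
    show ?thesis
    proof (cases "Y = [] \<and> r = 0")
      case True
      then show ?thesis using L 3 X hc hs hB by simp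
    next
      case False
      have vb: "v!c = b \<and> c < length v"
      proof (cases "Y = []")
        case True
        then have "r > 0" using False by simp
        then show ?thesis using v0 X True L by (auto intro: nth_mid)
      next
        case F2: False
        then obtain Y' where "Y = b # Y'" using Yc by (metis letter.exhaust)
        then show ?thesis using v0 X L by (simp add: nth_append)
      qed
      have hsc: "s \<le> c"
      proof (rule ccontr)
        assume "\<not> s \<le> c"
        then have "v!(length v - 1 - c) = a" using L X 3 by (subst v4, intro nth_mid) auto
        moreover have "v!c = v!(length v - 1 - c)" using P[of c] vb by auto
        ultimately show False using vb by simp
      qed
      show ?thesis
      proof (cases "Y = []")
        case True
        then show ?thesis using L 3 X hc hr hsc by simp
      next
        case F2: False
        then obtain Y' where Y: "Y = b # Y'" using Yc by (metis letter.exhaust)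
        obtain d' Z where Y': "Y' = replicate d' b @ Z" and Zc: "Z = [] \<or> (\<exists>y Z'. Z = y # Z' \<and> y \<noteq> b)"
          using split_lead[of Y' b] by blast
        define d where "d = Suc d'"
        have XX: "X = replicate c a @ replicate d b @ Z" using X Y Y' d_def by simp
        show ?thesis
        proof (cases "Z = []")
          case True
          have "count_list (replicate c a) a + count_list (replicate d b) b \<le> n + 1"
            using T2[of "replicate c a" "replicate d b" n] hX XX True by simp
          then show ?thesis using L 3 XX True hc hr hsc by (simp add: count_rep)
        next
          case F3: False
          then obtain Z' where Z: "Z = a # Z'" using Zc by (metis letter.exhaust)
          have va: "v!(c+d) = a" using v0 XX Z by (simp add: nth_append)
          have rs: "r + s \<le> c + d"
          proof (rule ccontr)
            assume "\<not> r + s \<le> c + d"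
            then have "v!(length v - 1 - (c+d)) = b" using L XX Z hsc 3
              by (subst v0, intro nth_mid) auto
            moreover have "v!(c+d) = v!(length v - 1 - (c+d))" using P[of "c+d"] L XX Z by auto
            ultimately show False using va by simp
          qed
          have "count_list (replicate c a @ replicate d b) b + count_list Z a \<le> n"
            using T2[of "replicate c a @ replicate d b" Z n] hX XX by simp
          then show ?thesis using L 3 XX rs cX lX hc hA by (simp add: count_rep)
        qed
      qed
    qed
  qed
qed

fun flip :: "letter \<Rightarrow> letter" where "flip a = b" | "flip b = a"

lemma count_flip: "count_list (map flip xs) a = count_list xs b"
proof (induction xs)
  case (Cons y ys) then show ?case by (cases y) auto
qed simp

lemma anti_flip: "antipalindrome v \<Longrightarrow> map flip (rev v) = v"
proof (rule nth_equalityI)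
  assume h: "antipalindrome v"
  show "length (map flip (rev v)) = length v" by simp
  fix i assume i: "i < length (map flip (rev v))"
  then have "v!i \<noteq> v!(length v - 1 - i)" using h unfolding antipalindrome_def by auto
  moreover have "map flip (rev v) ! i = flip (v!(length v - 1 - i))" using i by (simp add: rev_nth)
  ultimately show "map flip (rev v) ! i = v ! i" by (cases "v!i"; cases "v!(length v - 1 - i)") auto
qed

lemma anti_bound:
  assumes sv: "subseq v (replicate (n+1) b @ wpow [a,b] n @ replicate A b @ replicate B a)"
    and ap: "antipalindrome v" and hB: "2*n+1 \<le> B"
  shows "length v \<le> 2*B"
proof -
  obtain p X r s where v: "v = replicate p b @ X @ replicate r b @ replicate s a" and hp: "p \<le> n+1"
    and hX: "subseq X (wpow [a,b] n)" and hr: "r \<le> A" and hs: "s \<le> B"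
    using decomp[OF sv] by blast
  have AP: "\<And>i. i < length v \<Longrightarrow> v!i \<noteq> v!(length v - 1 - i)" using ap unfolding antipalindrome_def by blast
  have L: "length v = p + length X + r + s" using v by simp
  have cX: "count_list X a \<le> n" "count_list X b \<le> n"
    using count_mono[OF hX, of a] count_mono[OF hX, of b] wpow_counts[of n] by auto
  have ceq: "count_list v a = count_list v b"
    using count_flip[of "rev v"] anti_flip[OF ap] by simp
  have Lc: "length v = count_list v a + count_list v b" by (rule len_count)
  have ca: "count_list v a = count_list X a + s" using v by (simp add: count_rep)
  have cb: "count_list v b = p + count_list X b + r" using v by (simp add: count_rep)
  have v2: "v = (replicate p b @ X) @ replicate r b @ replicate s a" using v by simp
  have v3: "v = (replicate p b @ X @ replicate r b) @ replicate s a @ []" using v by simp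
  show ?thesis
  proof (cases "r = 0")
    case True
    then show ?thesis using ceq Lc cb cX hp hB by simp
  next
    case False
    have vL: "v!(length v - 1 - s) = b" using L False by (subst v2, intro nth_mid) auto
    have vs: "v!s = a" using AP[of s] vL L False by (cases "v!s") auto
    have vj: "v!j = b" if j: "j < s" for j
    proof -
      have "v!(length v - 1 - j) = a" using L j by (subst v3, intro nth_mid) auto
      then show ?thesis using AP[of j] L j by (cases "v!j") auto
    qed
    consider "s < p" | "p \<le> s \<and> s < p + length X" | "p + length X \<le> s" by linarith
    then show ?thesis
    proof cases
      case 1
      then have "v!s = b" using v by (simp add: nth_append)
      then show ?thesis using vs by simp
    next
      case 2
      have tk: "take (s-p) X = replicate (s-p) b"
      proof (rule replicate_eqI)
        show "length (take (s-p) X) = s-p" using 2 by auto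
        fix y assume "y \<in> set (take (s-p) X)"
        then obtain j where j: "j < length (take (s-p) X)" "y = take (s-p) X ! j" by (auto simp: in_set_conv_nth)
        then have "y = X ! j" by simp
        also have "\<dots> = v!(p+j)" using v j 2 by (simp add: nth_append)
        also have "\<dots> = b" using vj[of "p+j"] j 2 by auto
        finally show "y = b" .
      qed
      have "count_list (take (s-p) X) b + count_list (drop (s-p) X) a \<le> n"
        using T2[of "take (s-p) X" "drop (s-p) X" n] hX by simp
      moreover have "count_list X a = count_list (take (s-p) X) a + count_list (drop (s-p) X) a"
        by (metis append_take_drop_id count_list_append)
      ultimately have "count_list X a + (s - p) \<le> n" using tk by (simp add: count_rep)
      then show ?thesis using ceq Lc ca hp hB 2 by simp
    next
      case 3
      show ?thesis
      proof (cases "s < p + length X + r")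
        case True
        then have "v!s = b" using 3 by (subst v2, intro nth_mid) auto
        then show ?thesis using vs by simp
      next
        case F: False
        then show ?thesis using L hs by simp
      qed
    qed
  qed
qed

theorem lemma4:
  fixes n \<alpha> \<beta> :: nat
  assumes "n \<ge> 1"
    and "(\<alpha>, \<beta>) \<in> {(0,0),(1,0),(1,1),(2,1),(3,1),(3,2),(4,2)}"
  shows "S_d (wpow [b] (n+1) @ wpow [a,b] n @ wpow [b] (2*n+1+\<alpha>) @ wpow [a] (2*n+1+\<beta>))
           \<ge> 3*n + 1 + (\<alpha> + \<beta>) div 3"
proof -
  define A where "A = 2*n+1+\<alpha>"
  define B where "B = 2*n+1+\<beta>"
  define w where "w = replicate (n+1) b @ wpow [a,b] n @ replicate A b @ replicate B a"
  have weq: "wpow [b] (n+1) @ wpow [a,b] n @ wpow [b] (2*n+1+\<alpha>) @ wpow [a] (2*n+1+\<beta>) = w"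
    unfolding w_def A_def B_def by (simp add: wpow_def)
  have lw: "length w = 3*n+1+A+B" using wpow_counts[of n] unfolding w_def by simp
  define q where "q = (\<alpha>+\<beta>) div 3"
  have ab: "\<beta> \<le> \<alpha>" "q \<le> \<beta>" "\<beta> + q \<le> \<alpha>" "\<beta> \<le> 2" using assms(2) unfolding q_def by auto
  have hA: "2*n+1 \<le> A" "B \<le> n+1+A" "2*n+1 \<le> B" using ab assms(1) unfolding A_def B_def by linarith+
  have bound: "3*n+1+q \<le> k"
    if "\<exists>v. subseq v w \<and> length w - length v = k \<and> (palindrome v \<or> antipalindrome v)" for k
  proof -
    from that obtain v where v: "subseq v w" "length w - length v = k" "palindrome v \<or> antipalindrome v"
      by (elim exE conjE) (rule that)
    show ?thesis
    proof (cases "palindrome v")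
      case True
      have "length v \<le> 2*n+1+A"
        by (rule pal_bound[OF v(1)[unfolded w_def] True hA(1) hA(2)])
      then show ?thesis using v(2) lw ab unfolding A_def B_def by arith
    next
      case False
      then have "antipalindrome v" using v(3) by (elim disjE) auto
      then have "length v \<le> 2*B"
        by (rule anti_bound[OF v(1)[unfolded w_def] _ hA(3)])
      then show ?thesis using v(2) lw ab unfolding A_def B_def by arith
    qed
  qed
  have ex: "\<exists>k v. subseq v w \<and> length w - length v = k \<and> (palindrome v \<or> antipalindrome v)"
    by (rule exI[of _ "length w"], rule exI[of _ "[]"]) (simp add: palindrome_def)
  show ?thesis unfolding weq S_d_def q_def[symmetric]
    by (rule bound, rule LeastI_ex[OF ex])
qed

end
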